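(* Let $G,G'$ be groups, $Q$ a non-empty set, $\alpha\in[0,1]$, and $f:G\to G'$ an anti-homomorphism. Let $\theta$ be a $Q$-fuzzy subset of $G$ such that $\theta^\alpha$ is an $\alpha$-$Q$-fuzzy subgroup of $G$. Then the image $f(\theta^\alpha)$ is an $\alpha$-$Q$-fuzzy subgroup of $G'$, in the sense that $f(\theta^\alpha)(ab,q)\ge\min\{f(\theta^\alpha)(a,q),f(\theta^\alpha)(b,q)\}$ and $f(\theta^\alpha)(a^{-1},q)\ge f(\theta^\alpha)(a,q)$ for all $a,b\in G'$, $q\in Q$.
   Context: A map $f:G\to G'$ between groups is an anti-homomorphism if $f(xy)=f(y)f(x)$ for all $x,y\in G$. A $Q$-fuzzy subset of a group $H$ is a map $H\times Q\to[0,1]$. For $\alpha\in[0,1]$, $\theta^\alpha(x,q)=\min\{\theta(x,q),\alpha\}$. $\theta^\alpha$ is called an $\alpha$-$Q$-fuzzy subgroup of $G$ if $\theta^\alpha(xy,q)\ge\min\{\theta^\alpha(x,q),\theta^\alpha(y,q)\}$ and $\theta^\alpha(x^{-1},q)\ge\theta^\alpha(x,q)$ for all $x,y\in G$, $q\in Q$. The image of a $Q$-fuzzy subset $\mu$ of $G$ is $f(\mu)(x',q)=\sup\{\mu(x,q): x\in G,\ f(x)=x'\}$ (with $\sup\emptyset=0$). *)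

theory Defs
  imports Complex_Main "HOL-Algebra.Group"
begin

definition anti_hom :: "('a, 'c) monoid_scheme \<Rightarrow> ('b, 'd) monoid_scheme \<Rightarrow> ('a \<Rightarrow> 'b) \<Rightarrow> bool" where
  "anti_hom G H f \<longleftrightarrow> f \<in> carrier G \<rightarrow> carrier H \<and>
     (\<forall>x\<in>carrier G. \<forall>y\<in>carrier G. f (x \<otimes>\<^bsub>G\<^esub> y) = f y \<otimes>\<^bsub>H\<^esub> f x)"

definition Q_fuzzy_subset :: "('a, 'c) monoid_scheme \<Rightarrow> 'q set \<Rightarrow> ('a \<Rightarrow> 'q \<Rightarrow> real) \<Rightarrow> bool" where
  "Q_fuzzy_subset G Q \<theta> \<longleftrightarrow> (\<forall>x\<in>carrier G. \<forall>q\<in>Q. 0 \<le> \<theta> x q \<and> \<theta> x q \<le> 1)"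

definition alpha_cut :: "('a \<Rightarrow> 'q \<Rightarrow> real) \<Rightarrow> real \<Rightarrow> ('a \<Rightarrow> 'q \<Rightarrow> real)" where
  "alpha_cut \<theta> \<alpha> = (\<lambda>x q. min (\<theta> x q) \<alpha>)"

definition Q_fuzzy_subgroup_cond :: "('a, 'c) monoid_scheme \<Rightarrow> 'q set \<Rightarrow> ('a \<Rightarrow> 'q \<Rightarrow> real) \<Rightarrow> bool" where
  "Q_fuzzy_subgroup_cond G Q \<mu> \<longleftrightarrow>
     (\<forall>x\<in>carrier G. \<forall>y\<in>carrier G. \<forall>q\<in>Q. \<mu> (x \<otimes>\<^bsub>G\<^esub> y) q \<ge> min (\<mu> x q) (\<mu> y q)) \<and>
     (\<forall>x\<in>carrier G. \<forall>q\<in>Q. \<mu> (inv\<^bsub>G\<^esub> x) q \<ge> \<mu> x q)"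

definition fuzzy_image :: "('a, 'c) monoid_scheme \<Rightarrow> ('a \<Rightarrow> 'b) \<Rightarrow> ('a \<Rightarrow> 'q \<Rightarrow> real) \<Rightarrow> ('b \<Rightarrow> 'q \<Rightarrow> real)" where
  "fuzzy_image G f \<mu> = (\<lambda>x' q. if {x\<in>carrier G. f x = x'} = {} then 0
       else Sup {\<mu> x q | x. x \<in> carrier G \<and> f x = x'})"

end

theory Submission
  imports Defs
begin

theorem proposition5p2:
  fixes G :: "('a, 'c) monoid_scheme" and G' :: "('b, 'd) monoid_scheme"
    and Q :: "'q set" and \<alpha> :: real and f :: "'a \<Rightarrow> 'b" and \<theta> :: "'a \<Rightarrow> 'q \<Rightarrow> real"
  assumes "group G" and "group G'" and "Q \<noteq> {}"
    and "0 \<le> \<alpha>" and "\<alpha> \<le> 1"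
    and "anti_hom G G' f"
    and "Q_fuzzy_subset G Q \<theta>"
    and "Q_fuzzy_subgroup_cond G Q (alpha_cut \<theta> \<alpha>)"
  shows "Q_fuzzy_subgroup_cond G' Q (fuzzy_image G f (alpha_cut \<theta> \<alpha>))"
proof -
  interpret G: group G by fact
  interpret H: group G' by fact
  define \<mu> where "\<mu> = alpha_cut \<theta> \<alpha>"
  define S where "S a q = {\<mu> x q | x. x \<in> carrier G \<and> f x = a}" for a q
  have fc: "\<And>x. x \<in> carrier G \<Longrightarrow> f x \<in> carrier G'" and
       fm: "\<And>x y. x \<in> carrier G \<Longrightarrow> y \<in> carrier G \<Longrightarrow> f (x \<otimes>\<^bsub>G\<^esub> y) = f y \<otimes>\<^bsub>G'\<^esub> f x"
    using assms(6) unfolding anti_hom_def by auto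
  have mu0: "\<And>x q. x \<in> carrier G \<Longrightarrow> q \<in> Q \<Longrightarrow> 0 \<le> \<mu> x q \<and> \<mu> x q \<le> \<alpha>"
    using assms(7,4) unfolding Q_fuzzy_subset_def \<mu>_def alpha_cut_def by auto
  have mmul: "\<And>x y q. x \<in> carrier G \<Longrightarrow> y \<in> carrier G \<Longrightarrow> q \<in> Q \<Longrightarrow> \<mu> (x \<otimes>\<^bsub>G\<^esub> y) q \<ge> min (\<mu> x q) (\<mu> y q)"
   and minv: "\<And>x q. x \<in> carrier G \<Longrightarrow> q \<in> Q \<Longrightarrow> \<mu> (inv\<^bsub>G\<^esub> x) q \<ge> \<mu> x q"
    using assms(8) unfolding Q_fuzzy_subgroup_cond_def \<mu>_def by auto
  have img: "fuzzy_image G f \<mu> a q = (if {x\<in>carrier G. f x = a} = {} then 0 else Sup (S a q))" for a q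
    unfolding fuzzy_image_def S_def by simp
  have bdd: "bdd_above (S a q)" if "q \<in> Q" for a q
    unfolding S_def bdd_above_def using mu0[OF _ that] by blast
  have ne: "S a q \<noteq> {}" if "{x\<in>carrier G. f x = a} \<noteq> {}" for a q
    using that unfolding S_def by blast
  have upper: "\<mu> x q \<le> fuzzy_image G f \<mu> a q" if "x \<in> carrier G" "f x = a" "q \<in> Q" for x a q
  proof -
    have "{x\<in>carrier G. f x = a} \<noteq> {}" using that by blast
    moreover have "\<mu> x q \<in> S a q" using that unfolding S_def by blast
    ultimately show ?thesis unfolding img using cSup_upper[OF _ bdd[OF that(3)]] by (simp only: if_False)
  qed
  have nonneg: "0 \<le> fuzzy_image G f \<mu> a q" if "q \<in> Q" for a q
  proof (cases "{x\<in>carrier G. f x = a} = {}")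
    case True then show ?thesis unfolding img by simp
  next
    case False
    then obtain x where "x \<in> carrier G" "f x = a" by blast
    then show ?thesis using upper[OF _ _ that] mu0[OF _ that] by (meson order_trans)
  qed
  have f1: "f \<one>\<^bsub>G\<^esub> = \<one>\<^bsub>G'\<^esub>"
  proof -
    have "f \<one>\<^bsub>G\<^esub> \<otimes>\<^bsub>G'\<^esub> f \<one>\<^bsub>G\<^esub> = f \<one>\<^bsub>G\<^esub>"
      using fm[of "\<one>\<^bsub>G\<^esub>" "\<one>\<^bsub>G\<^esub>"] by simp
    then show ?thesis using fc[of "\<one>\<^bsub>G\<^esub>"] by (metis G.one_closed H.r_cancel_one)
  qed
  have finv: "f (inv\<^bsub>G\<^esub> x) = inv\<^bsub>G'\<^esub> f x" if "x \<in> carrier G" for x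
  proof -
    have "f (inv\<^bsub>G\<^esub> x) \<otimes>\<^bsub>G'\<^esub> f x = \<one>\<^bsub>G'\<^esub>"
      using fm[of x "inv\<^bsub>G\<^esub> x"] that f1 by simp
    then show ?thesis using that fc by (simp add: H.inv_equality)
  qed
  show ?thesis
    unfolding Q_fuzzy_subgroup_cond_def \<mu>_def[symmetric]
  proof (intro conjI ballI)
    fix a b q assume a: "a \<in> carrier G'" and b: "b \<in> carrier G'" and q: "q \<in> Q"
    show "fuzzy_image G f \<mu> (a \<otimes>\<^bsub>G'\<^esub> b) q \<ge> min (fuzzy_image G f \<mu> a q) (fuzzy_image G f \<mu> b q)"
    proof (cases "{x\<in>carrier G. f x = a} = {} \<or> {x\<in>carrier G. f x = b} = {}")
      case True
      then show ?thesis using nonneg[OF q] unfolding img[of a] img[of b]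
        by (smt (verit))
    next
      case False
      hence na: "{x\<in>carrier G. f x = a} \<noteq> {}" and nb: "{x\<in>carrier G. f x = b} \<noteq> {}" by auto
      show ?thesis
      proof (rule ccontr)
        assume "\<not> ?thesis"
        moreover have "fuzzy_image G f \<mu> a q = Sup (S a q)" "fuzzy_image G f \<mu> b q = Sup (S b q)"
          using na nb unfolding img[of a] img[of b] by (simp only: if_False)+
        ultimately have lt: "fuzzy_image G f \<mu> (a \<otimes>\<^bsub>G'\<^esub> b) q < Sup (S a q)"
                  "fuzzy_image G f \<mu> (a \<otimes>\<^bsub>G'\<^esub> b) q < Sup (S b q)"
          by linarith+
        obtain u where "u \<in> S a q" "fuzzy_image G f \<mu> (a \<otimes>\<^bsub>G'\<^esub> b) q < u"
          using less_cSupE[OF lt(1) ne[OF na]] by blast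
        then obtain x where x: "x \<in> carrier G" "f x = a" "fuzzy_image G f \<mu> (a \<otimes>\<^bsub>G'\<^esub> b) q < \<mu> x q"
          unfolding S_def by blast
        obtain v where "v \<in> S b q" "fuzzy_image G f \<mu> (a \<otimes>\<^bsub>G'\<^esub> b) q < v"
          using less_cSupE[OF lt(2) ne[OF nb]] by blast
        then obtain y where y: "y \<in> carrier G" "f y = b" "fuzzy_image G f \<mu> (a \<otimes>\<^bsub>G'\<^esub> b) q < \<mu> y q"
          unfolding S_def by blast
        have "f (y \<otimes>\<^bsub>G\<^esub> x) = a \<otimes>\<^bsub>G'\<^esub> b" using fm x y by simp
        hence "\<mu> (y \<otimes>\<^bsub>G\<^esub> x) q \<le> fuzzy_image G f \<mu> (a \<otimes>\<^bsub>G'\<^esub> b) q"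
          using upper x y q by blast
        moreover have "\<mu> (y \<otimes>\<^bsub>G\<^esub> x) q \<ge> min (\<mu> y q) (\<mu> x q)" using mmul x y q by blast
        ultimately show False using x y by linarith
      qed
    qed
  next
    fix a q assume a: "a \<in> carrier G'" and q: "q \<in> Q"
    show "fuzzy_image G f \<mu> (inv\<^bsub>G'\<^esub> a) q \<ge> fuzzy_image G f \<mu> a q"
    proof (cases "{x\<in>carrier G. f x = a} = {}")
      case True
      then show ?thesis using nonneg[OF q] unfolding img[of a] by simp
    next
      case False
      have "Sup (S a q) \<le> fuzzy_image G f \<mu> (inv\<^bsub>G'\<^esub> a) q"
      proof (rule cSup_least[OF ne[OF False]])
        fix u assume "u \<in> S a q"
        then obtain x where x: "x \<in> carrier G" "f x = a" "u = \<mu> x q" unfolding S_def by blast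
        have "\<mu> (inv\<^bsub>G\<^esub> x) q \<le> fuzzy_image G f \<mu> (inv\<^bsub>G'\<^esub> a) q"
          using upper[of "inv\<^bsub>G\<^esub> x" "inv\<^bsub>G'\<^esub> a" q] x q finv by simp
        then show "u \<le> fuzzy_image G f \<mu> (inv\<^bsub>G'\<^esub> a) q" using minv[OF x(1) q] x(3) by linarith
      qed
      then show ?thesis using False unfolding img[of a] by (simp only: if_False)
    qed
  qed
qed

end
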